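(* The following functions are real primitive recursive: for each $n\in\mathbf N$, the total $n$-ary constant functions $\mathbf R^n\to\mathbf R$ with values $0$, $1$, $-1$; for each $n\in\mathbf N$ and $i<n$, the projection $\mathbf R^n\to\mathbf R$ onto the $i$-th coordinate; the total binary addition and multiplication $\mathbf R^2\to\mathbf R$; the functions $x\mapsto 1/x$, $x\mapsto\sqrt x$ and $x\mapsto\ln x$, each with domain exactly $(0,\infty)$; the total functions $\sin$, $\cos$, $\exp$ on $\mathbf R$; and the nullary function with value $\pi$.
   Context: Functions may be partial: $f:\subseteq\mathbf R^m\to\mathbf R^n$ has domain $\operatorname{dom} f\subseteq\mathbf R^m$; $\mathbf R^0$ is a one-point space, and a nullary function is a function on it. Juxtaposition: $[g_0,\dots,g_{n-1}]\vec x=(g_0\vec x,\dots,g_{n-1}\vec x)$, defined exactly when $\vec x\in\bigcap_j\operatorname{dom} g_j$. Composition: $(f\circ g)\vec x=f(g\vec x)$, defined exactly when $\vec x\in\operatorname{dom} g$ and $g\vec x\in\operatorname{dom} f$. Differential recursion: for $f:\subseteq\mathbf R^m\to\mathbf R^n$, $g:\subseteq\mathbf R^{m+1+n}\to\mathbf R^n$ and $\vec v\in\mathbf R^m$, let $H_{\vec v}$ be the set of all $h:\subseteq\mathbf R\to\mathbf R^n$ such that (1) $\operatorname{dom} h$ is empty or a (possibly unbounded) interval containing $0$; (2) $\vec v\in\operatorname{dom} f$ if $\operatorname{dom} h\ne\emptyset$; (3) $(\vec v,\tau,h\tau)\in\operatorname{dom} g$ for every $\tau\in\operatorname{dom} h$;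 (4) $h t=f\vec v+\int_0^t g(\vec v,\tau,h\tau)\,d\tau$ for every $t\in\operatorname{dom} h$. A function $h\in H$ is unique in a set $H$ if for every $h'\in H$, $h'$ and $h$ agree on $\operatorname{dom} h\cap\operatorname{dom} h'$. Let $K_{\vec v}$ be the set of functions unique in $H_{\vec v}$ (these agree on common domains) and let $h_{\vec v}$ be their union. Define $\mathrm{PR}(f,g):\subseteq\mathbf R^{m+1}\to\mathbf R^n$ by $\operatorname{dom}\mathrm{PR}(f,g)=\{(\vec v,t)\mid t\in\operatorname{dom} h_{\vec v}\}$ and $\mathrm{PR}(f,g)(\vec v,t)=h_{\vec v}t$. The class of real primitive recursive functions is the smallest class containing the nullary functions with values $0$, $1$, $-1$ and closed under juxtaposition, composition and $\mathrm{PR}$. *)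

theory Defs
  imports "HOL-Analysis.Analysis"
begin

text \<open>
  A partial function R^m -> R^n is represented by its arity m, coarity n and a map
  F :: real list => real list option. Points of R^m are lists of length m;
  F xs = None means xs is outside the domain. All functions built below are
  canonical: F xs = None whenever length xs is not m, and F xs = Some ys implies
  length ys = n.
\<close>

type_synonym pfun = "real list \<Rightarrow> real list option"

definition nconst :: "real \<Rightarrow> pfun" where
  "nconst c = (\<lambda>xs. if xs = [] then Some [c] else None)"

definition juxt :: "nat \<Rightarrow> pfun list \<Rightarrow> pfun" where
  "juxt m gs = (\<lambda>xs. if length xs = m \<and> (\<forall>g\<in>set gs. g xs \<noteq> None)
                      then Some (map (\<lambda>g. hd (the (g xs))) gs) else None)"

definition pcomp :: "pfun \<Rightarrow> pfun \<Rightarrow> pfun" where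
  "pcomp f g = (\<lambda>xs. case g xs of None \<Rightarrow> None | Some ys \<Rightarrow> f ys)"

text \<open>The set H_v of candidate solutions, given as pairs (domain D, function h).
  Integrals are Lebesgue integrals; LBINT over 0..t is oriented (negative for t < 0).\<close>
definition PR_H :: "nat \<Rightarrow> pfun \<Rightarrow> pfun \<Rightarrow> real list \<Rightarrow> (real set \<times> (real \<Rightarrow> real list)) set" where
  "PR_H n f g v = {(D, h).
      (D = {} \<or> (is_interval D \<and> 0 \<in> D)) \<and>
      (D \<noteq> {} \<longrightarrow> f v \<noteq> None) \<and>
      (\<forall>\<tau>\<in>D. g (v @ [\<tau>] @ h \<tau>) \<noteq> None) \<and>
      (\<forall>t\<in>D. length (h t) = n \<and>
         (\<forall>k<n. interval_lebesgue_integrable lborel (ereal 0) (ereal t)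
                   (\<lambda>\<tau>. the (g (v @ [\<tau>] @ h \<tau>)) ! k) \<and>
                h t ! k = the (f v) ! k
                   + (LBINT \<tau>=ereal 0..ereal t. the (g (v @ [\<tau>] @ h \<tau>)) ! k)))}"

definition PR_K :: "nat \<Rightarrow> pfun \<Rightarrow> pfun \<Rightarrow> real list \<Rightarrow> (real set \<times> (real \<Rightarrow> real list)) set" where
  "PR_K n f g v = {(D, h) \<in> PR_H n f g v.
      \<forall>(D', h') \<in> PR_H n f g v. \<forall>t \<in> D \<inter> D'. h t = h' t}"

definition PR :: "nat \<Rightarrow> nat \<Rightarrow> pfun \<Rightarrow> pfun \<Rightarrow> pfun" where
  "PR m n f g = (\<lambda>xs.
     if length xs = m + 1 \<and> (\<exists>(D, h) \<in> PR_K n f g (take m xs). last xs \<in> D)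
     then Some ((SOME y. \<exists>(D, h) \<in> PR_K n f g (take m xs). last xs \<in> D \<and> y = h (last xs)))
     else None)"

inductive rpr :: "nat \<Rightarrow> nat \<Rightarrow> pfun \<Rightarrow> bool" where
  zero: "rpr 0 1 (nconst 0)"
| one: "rpr 0 1 (nconst 1)"
| mone: "rpr 0 1 (nconst (-1))"
| juxt: "(\<forall>g\<in>set gs. rpr m 1 g) \<Longrightarrow> rpr m (length gs) (juxt m gs)"
| comp: "rpr k n f \<Longrightarrow> rpr m k g \<Longrightarrow> rpr m n (pcomp f g)"
| pr: "rpr m n f \<Longrightarrow> rpr (m + 1 + n) n g \<Longrightarrow> rpr (m + 1) n (PR m n f g)"

end

theory Submission
  imports Defs
begin

lemma ilbi_HK:
  fixes G :: "real \<Rightarrow> real"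
  assumes "a \<le> b" "interval_lebesgue_integrable lborel (ereal a) (ereal b) G"
  shows "G integrable_on {a..b}" "(LBINT \<tau>=ereal a..ereal b. G \<tau>) = integral {a..b} G"
proof -
  have "set_integrable lborel {a<..<b} G"
    using assms unfolding interval_lebesgue_integrable_def by simp
  moreover have "set_integrable lborel {a<..<b} G \<longleftrightarrow> set_integrable lborel {a..b} G"
    by (rule set_integrable_discrete_difference[where X="{a,b}"]) auto
  ultimately have si: "set_integrable lborel {a..b} G" by simp
  show "G integrable_on {a..b}" using set_borel_integral_eq_integral(1)[OF si] .
  show "(LBINT \<tau>=ereal a..ereal b. G \<tau>) = integral {a..b} G"
    using set_borel_integral_eq_integral(2)[OF si] interval_integral_Icc[OF assms(1), of G] by simp
qed

lemma LEM_INT: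
  fixes G H :: "real \<Rightarrow> real"
  assumes lo: "lo \<le> 0" and hi: "0 \<le> hi"
    and hyp: "\<And>s. s \<in> {lo..hi} \<Longrightarrow> interval_lebesgue_integrable lborel (ereal 0) (ereal s) G
                  \<and> H s = c + (LBINT \<tau>=ereal 0..ereal s. G \<tau>)"
  shows "continuous_on {lo..hi} H"
    and "continuous_on {lo..hi} G \<Longrightarrow> s \<in> {lo..hi} \<Longrightarrow> (H has_real_derivative G s) (at s within {lo..hi})"
proof -
  have i1: "G integrable_on {0..hi}" using hyp[of hi] lo hi ilbi_HK(1)[of 0 hi G] by auto
  have "interval_lebesgue_integrable lborel (ereal lo) (ereal 0) G"
    by (rule interval_integrable_endpoints_reverse[THEN iffD1]) (use hyp[of lo] lo hi in auto)
  hence i2: "G integrable_on {lo..0}" using lo ilbi_HK(1)[of lo 0 G] by auto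
  have iG: "G integrable_on {lo..hi}" using Henstock_Kurzweil_Integration.integrable_combine[OF lo hi i2 i1] .
  define I where "I = (\<lambda>x. integral {lo..x} G)"
  have eq: "H s = c + I s - I 0" if s: "s \<in> {lo..hi}" for s
  proof (cases "0 \<le> s")
    case True
    have "H s = c + integral {0..s} G"
      using hyp[OF s] ilbi_HK(2)[OF True] by simp
    moreover have "integral {lo..0} G + integral {0..s} G = integral {lo..s} G"
      proof (rule Henstock_Kurzweil_Integration.integral_combine)
      show "G integrable_on {lo..s}" by (rule integrable_subinterval_real[OF iG]) (use s in auto)
    qed (use lo True in auto)
    ultimately show ?thesis unfolding I_def by simp
  next
    case False
    have "(LBINT \<tau>=ereal 0..ereal s. G \<tau>) = - (LBINT \<tau>=ereal s..ereal 0. G \<tau>)"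
      using interval_integral_endpoints_reverse by blast
    moreover have "interval_lebesgue_integrable lborel (ereal s) (ereal 0) G"
      by (rule interval_integrable_endpoints_reverse[THEN iffD1]) (use hyp[OF s] in auto)
    ultimately have "H s = c - integral {s..0} G"
      using hyp[OF s] ilbi_HK(2)[of s 0 G] False by simp
    moreover have "integral {lo..s} G + integral {s..0} G = integral {lo..0} G"
      proof (rule Henstock_Kurzweil_Integration.integral_combine)
      show "G integrable_on {lo..0}" by (rule integrable_subinterval_real[OF iG]) (use hi in auto)
    qed (use s False in auto)
    ultimately show ?thesis unfolding I_def by simp
  qed
  have cI: "continuous_on {lo..hi} I" unfolding I_def by (rule indefinite_integral_continuous_1[OF iG])
  show "continuous_on {lo..hi} H"
    by (rule continuous_on_eq[where f="\<lambda>s. c + I s - I 0"]) (auto intro!: continuous_intros cI simp: eq)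
  assume cG: "continuous_on {lo..hi} G" and s: "s \<in> {lo..hi}"
  have "((\<lambda>s. c + I s - I 0) has_real_derivative G s) (at s within {lo..hi})"
    unfolding I_def using integral_has_real_derivative[OF cG s] by (auto intro!: derivative_eq_intros)
  from this show "(H has_real_derivative G s) (at s within {lo..hi})"
    by (rule has_field_derivative_transform_within[OF _ zero_less_one s]) (use eq in simp)
qed

lemma interval_sub: "is_interval D \<Longrightarrow> 0 \<in> D \<Longrightarrow> t \<in> D \<Longrightarrow> {min 0 t..max 0 t} \<subseteq> (D::real set)"
proof
  fix x assume a: "is_interval D" "0 \<in> D" "t \<in> D" and x: "x \<in> {min 0 t..max 0 t}"
  show "x \<in> D"
  proof (cases "0 \<le> t")
    case True
    then show ?thesis using a x unfolding is_interval_1 by (metis atLeastAtMost_iff max.absorb2 min.absorb1)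
  next
    case False
    then show ?thesis using a x unfolding is_interval_1
      by (metis atLeastAtMost_iff linorder_linear max.absorb1 min.absorb2)
  qed
qed

lemma ilbi_cont: "continuous_on {min a b..max a b} G \<Longrightarrow> interval_lebesgue_integrable lborel (ereal a) (ereal b) G"
proof (cases "a \<le> b")
  case True
  assume "continuous_on {min a b..max a b} G"
  then show ?thesis using True by (intro interval_integrable_continuous_on) simp_all
next
  case False
  assume c: "continuous_on {min a b..max a b} G"
  show ?thesis
    by (rule interval_integrable_endpoints_reverse[THEN iffD2], rule interval_integrable_continuous_on)
       (use False c in \<open>simp_all add: min_def max_def\<close>)
qed

lemma GEN:
  fixes Y :: "real \<Rightarrow> real list" and \<Phi> :: "real \<Rightarrow> real list \<Rightarrow> real list"
  assumes lv: "length v = m"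
  and fv: "f v = Some c" and lc: "length c = n"
  and gv: "\<And>\<tau> z. length z = n \<Longrightarrow> g (v @ [\<tau>] @ z) = Some (\<Phi> \<tau> z)"
  and iD: "is_interval D0" and D00: "0 \<in> D0"
  and lY: "\<And>t. t \<in> D0 \<Longrightarrow> length (Y t) = n"
  and Y0: "Y 0 = c"
  and dY: "\<And>t k. t \<in> D0 \<Longrightarrow> k < n \<Longrightarrow> ((\<lambda>s. Y s ! k) has_real_derivative \<Phi> t (Y t) ! k) (at t within D0)"
  and cY: "\<And>k. k < n \<Longrightarrow> continuous_on D0 (\<lambda>t. \<Phi> t (Y t) ! k)"
  and cont: "\<And>S z k. (\<And>k. k < n \<Longrightarrow> continuous_on S (\<lambda>s. z s ! k)) \<Longrightarrow> (\<And>s. s \<in> S \<Longrightarrow> length (z s) = n)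
               \<Longrightarrow> k < n \<Longrightarrow> continuous_on S (\<lambda>s. \<Phi> s (z s) ! k)"
  and uniq: "\<And>lo hi z. lo \<le> 0 \<Longrightarrow> 0 \<le> hi \<Longrightarrow> (\<And>s. s \<in> {lo..hi} \<Longrightarrow> length (z s) = n) \<Longrightarrow> z 0 = c
     \<Longrightarrow> (\<And>k. k < n \<Longrightarrow> continuous_on {lo..hi} (\<lambda>s. z s ! k))
     \<Longrightarrow> (\<And>s k. s \<in> {lo..hi} \<Longrightarrow> k < n \<Longrightarrow> ((\<lambda>s. z s ! k) has_real_derivative \<Phi> s (z s) ! k) (at s within {lo..hi}))
     \<Longrightarrow> {lo..hi} \<subseteq> D0 \<and> (\<forall>s\<in>{lo..hi}. z s = Y s)"
  shows "PR m n f g (v @ [t]) = (if t \<in> D0 then Some (Y t) else None)"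
proof -
  have mem: "(D0, Y) \<in> PR_H n f g v"
  proof -
    have A: "\<forall>\<tau>\<in>D0. g (v @ [\<tau>] @ Y \<tau>) \<noteq> None" using gv lY by auto
    have B0: "interval_lebesgue_integrable lborel (ereal 0) (ereal t)
                   (\<lambda>\<tau>. the (g (v @ [\<tau>] @ Y \<tau>)) ! k) \<and>
                Y t ! k = the (f v) ! k
                   + (LBINT \<tau>=ereal 0..ereal t. the (g (v @ [\<tau>] @ Y \<tau>)) ! k)"
      if t: "t \<in> D0" and k: "k < n" for t k
    proof
      have J: "{min 0 t..max 0 t} \<subseteq> D0" using interval_sub[OF iD D00 t] .
      have cG: "continuous_on {min 0 t..max 0 t} (\<lambda>\<tau>. the (g (v @ [\<tau>] @ Y \<tau>)) ! k)"
        apply (rule continuous_on_eq[OF continuous_on_subset[OF cY[OF k] J]])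
        using J gv lY by auto
      show "interval_lebesgue_integrable lborel (ereal 0) (ereal t) (\<lambda>\<tau>. the (g (v @ [\<tau>] @ Y \<tau>)) ! k)"
        by (rule ilbi_cont[OF cG])
      have "(LBINT \<tau>=ereal 0..ereal t. the (g (v @ [\<tau>] @ Y \<tau>)) ! k) = Y t ! k - Y 0 ! k"
      proof (rule interval_integral_FTC_finite[OF cG])
        fix x assume "min 0 t \<le> x" "x \<le> max 0 t"
        hence x: "x \<in> {min 0 t..max 0 t}" by simp
        have "((\<lambda>s. Y s ! k) has_real_derivative \<Phi> x (Y x) ! k) (at x within {min 0 t..max 0 t})"
          using DERIV_subset[OF dY[of x k] J] x J k by auto
        moreover have "\<Phi> x (Y x) ! k = the (g (v @ [x] @ Y x)) ! k" using gv lY x J by auto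
        ultimately show "((\<lambda>s. Y s ! k) has_vector_derivative the (g (v @ [x] @ Y x)) ! k) (at x within {min 0 t..max 0 t})"
          by (simp add: has_real_derivative_iff_has_vector_derivative)
      qed
      then show "Y t ! k = the (f v) ! k + (LBINT \<tau>=ereal 0..ereal t. the (g (v @ [\<tau>] @ Y \<tau>)) ! k)"
        using fv Y0 by simp
    qed
    have B: "\<forall>t\<in>D0. length (Y t) = n \<and>
         (\<forall>k<n. interval_lebesgue_integrable lborel (ereal 0) (ereal t)
                   (\<lambda>\<tau>. the (g (v @ [\<tau>] @ Y \<tau>)) ! k) \<and>
                Y t ! k = the (f v) ! k
                   + (LBINT \<tau>=ereal 0..ereal t. the (g (v @ [\<tau>] @ Y \<tau>)) ! k))"
      using lY B0 by blast
    show ?thesis unfolding PR_H_def using iD D00 fv A B by auto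
  qed
  have uni: "t \<in> D0 \<and> h t = Y t" if Dh: "(D, h) \<in> PR_H n f g v" and t: "t \<in> D" for D h t
  proof -
    have iDD: "is_interval D" "0 \<in> D" using Dh t unfolding PR_H_def by auto
    have J: "{min 0 t..max 0 t} \<subseteq> D" using interval_sub[OF iDD t] .
    have H: "\<And>s. s \<in> D \<Longrightarrow> length (h s) = n \<and> (\<forall>k<n. interval_lebesgue_integrable lborel (ereal 0) (ereal s)
                   (\<lambda>\<tau>. the (g (v @ [\<tau>] @ h \<tau>)) ! k) \<and>
                h s ! k = the (f v) ! k + (LBINT \<tau>=ereal 0..ereal s. the (g (v @ [\<tau>] @ h \<tau>)) ! k))"
      using Dh unfolding PR_H_def by auto
    let ?lo = "min 0 t" and ?hi = "max 0 t"
    have lo: "?lo \<le> 0" and hi: "0 \<le> ?hi" by auto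
    have lh: "\<And>s. s \<in> {?lo..?hi} \<Longrightarrow> length (h s) = n" using H J by blast
    have ch: "continuous_on {?lo..?hi} (\<lambda>s. h s ! k)" if k: "k < n" for k
      by (rule LEM_INT(1)[OF lo hi, where G="\<lambda>\<tau>. the (g (v @ [\<tau>] @ h \<tau>)) ! k" and c="c ! k"])
         (use H J k fv in auto)
    have dh: "((\<lambda>s. h s ! k) has_real_derivative \<Phi> s (h s) ! k) (at s within {?lo..?hi})"
      if s: "s \<in> {?lo..?hi}" and k: "k < n" for s k
    proof -
      have cP: "continuous_on {?lo..?hi} (\<lambda>s. \<Phi> s (h s) ! k)"
        by (rule cont[OF ch lh k])
      have cG: "continuous_on {?lo..?hi} (\<lambda>\<tau>. the (g (v @ [\<tau>] @ h \<tau>)) ! k)"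
        by (rule continuous_on_eq[OF cP]) (use gv lh in auto)
      have "((\<lambda>s. h s ! k) has_real_derivative (the (g (v @ [s] @ h s)) ! k)) (at s within {?lo..?hi})"
        by (rule LEM_INT(2)[OF lo hi, where G="\<lambda>\<tau>. the (g (v @ [\<tau>] @ h \<tau>)) ! k" and c="c ! k", OF _ cG s])
           (use H J k fv in auto)
      then show ?thesis using gv lh s by auto
    qed
    have h0: "h 0 = c"
    proof (rule nth_equalityI)
      show "length (h 0) = length c" using H iDD lc by auto
      fix k assume "k < length (h 0)"
      then show "h 0 ! k = c ! k" using H[of 0] iDD fv by auto
    qed
    have "{?lo..?hi} \<subseteq> D0 \<and> (\<forall>s\<in>{?lo..?hi}. h s = Y s)"
      by (rule uniq[OF lo hi lh h0 ch dh])
    then show ?thesis by auto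
  qed
  have KH: "\<And>D h. (D, h) \<in> PR_K n f g v \<Longrightarrow> (D, h) \<in> PR_H n f g v"
    unfolding PR_K_def by simp
  have all: "\<forall>(D', h') \<in> PR_H n f g v. \<forall>t \<in> D0 \<inter> D'. Y t = h' t"
  proof (intro ballI, clarify)
    fix D' h' t assume a: "(D', h') \<in> PR_H n f g v" "t \<in> D0" "t \<in> D'"
    have "h' t = Y t" using uni[OF a(1) a(3)] by (rule conjunct2)
    then show "Y t = h' t" by simp
  qed
  have memK: "(D0, Y) \<in> PR_K n f g v"
    unfolding PR_K_def mem_Collect_eq prod.case using mem all by simp
  have tk: "take m (v @ [t]) = v" "last (v @ [t]) = t" "length (v @ [t]) = m + 1" using lv by auto
  show ?thesis
  proof (cases "t \<in> D0")
    case True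
    have ex: "\<exists>(D, h) \<in> PR_K n f g v. t \<in> D"
      by (rule bexI[of _ "(D0, Y)"]) (use memK True in simp_all)
    have se: "(SOME y. \<exists>(D, h) \<in> PR_K n f g v. t \<in> D \<and> y = h t) = Y t"
    proof (rule some_equality)
      show "\<exists>(D, h) \<in> PR_K n f g v. t \<in> D \<and> Y t = h t"
        by (rule bexI[of _ "(D0, Y)"]) (use memK True in simp_all)
      fix y assume "\<exists>(D, h) \<in> PR_K n f g v. t \<in> D \<and> y = h t"
      then obtain D h where a: "(D, h) \<in> PR_K n f g v" "t \<in> D" "y = h t" by blast
      have "h t = Y t" using uni[OF KH[OF a(1)] a(2)] by (rule conjunct2)
      then show "y = Y t" using a(3) by simp
    qed
    have c: "length (v@[t]) = m+1 \<and> (\<exists>(D, h) \<in> PR_K n f g (take m (v@[t])). last (v@[t]) \<in> D)"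
      unfolding tk using ex by simp
    have "PR m n f g (v @ [t]) = Some (SOME y. \<exists>(D, h) \<in> PR_K n f g (take m (v@[t])). last (v@[t]) \<in> D \<and> y = h (last (v@[t])))"
      unfolding PR_def using c by (rule if_P)
    also have "\<dots> = Some (Y t)" unfolding tk(1,2) se ..
    finally show ?thesis using True by simp
  next
    case False
    have nex: "\<not> (\<exists>(D, h) \<in> PR_K n f g v. t \<in> D)"
    proof
      assume "\<exists>(D, h) \<in> PR_K n f g v. t \<in> D"
      then obtain D h where a: "(D, h) \<in> PR_K n f g v" "t \<in> D" by blast
      have "t \<in> D0" using uni[OF KH[OF a(1)] a(2)] by (rule conjunct1)
      then show False using False by simp
    qed
    have c: "\<not> (length (v@[t]) = m+1 \<and> (\<exists>(D, h) \<in> PR_K n f g (take m (v@[t])). last (v@[t]) \<in> D))"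
      unfolding tk using nex by simp
    have "PR m n f g (v @ [t]) = None"
      unfolding PR_def using c by (rule if_not_P)
    then show ?thesis using False by simp
  qed
qed

definition pt :: "nat \<Rightarrow> (real list \<Rightarrow> bool) \<Rightarrow> (real list \<Rightarrow> real) \<Rightarrow> pfun" where
  "pt m P F = (\<lambda>xs. if length xs = m \<and> P xs then Some [F xs] else None)"

lemma juxt_pt: "juxt m (map (\<lambda>(Q,G). pt m Q G) PGs) =
   (\<lambda>xs. if length xs = m \<and> (\<forall>(Q,G)\<in>set PGs. Q xs) then Some (map (\<lambda>(Q,G). G xs) PGs) else None)"
proof (rule ext)
  fix xs
  have e1: "length xs = m \<Longrightarrow> (\<forall>g\<in>set (map (\<lambda>(Q,G). pt m Q G) PGs). g xs \<noteq> None) = (\<forall>(Q,G)\<in>set PGs. Q xs)"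
    by (induction PGs) (auto simp: pt_def split: if_splits)
  have e2: "length xs = m \<Longrightarrow> (\<forall>(Q,G)\<in>set PGs. Q xs) \<Longrightarrow>
      map (\<lambda>g. hd (the (g xs))) (map (\<lambda>(Q,G). pt m Q G) PGs) = map (\<lambda>(Q,G). G xs) PGs"
    by (induction PGs) (auto simp: pt_def)
  show "juxt m (map (\<lambda>(Q,G). pt m Q G) PGs) xs =
   (if length xs = m \<and> (\<forall>(Q,G)\<in>set PGs. Q xs) then Some (map (\<lambda>(Q,G). G xs) PGs) else None)"
  proof (cases "length xs = m")
    case True
    show ?thesis unfolding juxt_def e1[OF True] using e2[OF True] True by auto
  next
    case False then show ?thesis unfolding juxt_def by simp
  qed
qed

lemma comp_pt: "length PGs = k \<Longrightarrow> pcomp (pt k P F) (juxt m (map (\<lambda>(Q,G). pt m Q G) PGs)) =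
   pt m (\<lambda>xs. (\<forall>(Q,G)\<in>set PGs. Q xs) \<and> P (map (\<lambda>(Q,G). G xs) PGs)) (\<lambda>xs. F (map (\<lambda>(Q,G). G xs) PGs))"
  unfolding juxt_pt by (rule ext) (auto simp: pcomp_def pt_def)

lemma pt_cong: "(\<And>xs. length xs = m \<Longrightarrow> P xs = P' xs) \<Longrightarrow> (\<And>xs. length xs = m \<Longrightarrow> P xs \<Longrightarrow> F xs = F' xs)
   \<Longrightarrow> pt m P F = pt m P' F'"
  by (rule ext) (auto simp: pt_def)

lemma rpr_comp_pt:
  assumes "rpr k 1 (pt k P F)" "\<forall>(Q,G)\<in>set PGs. rpr m 1 (pt m Q G)" "length PGs = k"
  shows "rpr m 1 (pt m (\<lambda>xs. (\<forall>(Q,G)\<in>set PGs. Q xs) \<and> P (map (\<lambda>(Q,G). G xs) PGs)) (\<lambda>xs. F (map (\<lambda>(Q,G). G xs) PGs)))"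
proof -
  have "rpr m (length (map (\<lambda>(Q,G). pt m Q G) PGs)) (juxt m (map (\<lambda>(Q,G). pt m Q G) PGs))"
    by (rule rpr.juxt) (use assms(2) in auto)
  then have "rpr m k (juxt m (map (\<lambda>(Q,G). pt m Q G) PGs))" using assms(3) by simp
  from rpr.comp[OF assms(1) this] show ?thesis using comp_pt[OF assms(3)] by simp
qed

lemma comp0:
  assumes "rpr 0 1 (pt 0 P F)" "\<And>xs. length xs = m \<Longrightarrow> P' xs = P []" "\<And>xs. length xs = m \<Longrightarrow> P' xs \<Longrightarrow> F' xs = F []"
  shows "rpr m 1 (pt m P' F')"
proof -
  have r: "rpr m 1 (pt m (\<lambda>xs. P []) (\<lambda>xs. F []))" using rpr_comp_pt[OF assms(1), of "[]" m] by simp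
  have "pt m (\<lambda>xs. P []) (\<lambda>xs. F []) = pt m P' F'" by (rule pt_cong) (use assms(2,3) in auto)
  then show ?thesis using r by simp
qed

lemma comp1:
  assumes "rpr 1 1 (pt 1 P F)" "rpr m 1 (pt m Q1 G1)"
    "\<And>xs. length xs = m \<Longrightarrow> P' xs = (Q1 xs \<and> P [G1 xs])"
    "\<And>xs. length xs = m \<Longrightarrow> P' xs \<Longrightarrow> F' xs = F [G1 xs]"
  shows "rpr m 1 (pt m P' F')"
proof -
  have r: "rpr m 1 (pt m (\<lambda>xs. Q1 xs \<and> P [G1 xs]) (\<lambda>xs. F [G1 xs]))"
    using rpr_comp_pt[OF assms(1), of "[(Q1,G1)]" m] assms(2) by simp
  have "pt m (\<lambda>xs. Q1 xs \<and> P [G1 xs]) (\<lambda>xs. F [G1 xs]) = pt m P' F'"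
    by (rule pt_cong) (use assms(3,4) in auto)
  then show ?thesis using r by simp
qed

lemma comp2:
  assumes "rpr 2 1 (pt 2 P F)" "rpr m 1 (pt m Q1 G1)" "rpr m 1 (pt m Q2 G2)"
    "\<And>xs. length xs = m \<Longrightarrow> P' xs = (Q1 xs \<and> Q2 xs \<and> P [G1 xs, G2 xs])"
    "\<And>xs. length xs = m \<Longrightarrow> P' xs \<Longrightarrow> F' xs = F [G1 xs, G2 xs]"
  shows "rpr m 1 (pt m P' F')"
proof -
  have r: "rpr m 1 (pt m (\<lambda>xs. (Q1 xs \<and> Q2 xs) \<and> P [G1 xs, G2 xs]) (\<lambda>xs. F [G1 xs, G2 xs]))"
    using rpr_comp_pt[OF assms(1), of "[(Q1,G1),(Q2,G2)]" m] assms(2,3) by simp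
  have "pt m (\<lambda>xs. (Q1 xs \<and> Q2 xs) \<and> P [G1 xs, G2 xs]) (\<lambda>xs. F [G1 xs, G2 xs]) = pt m P' F'"
    by (rule pt_cong) (use assms(4,5) in auto)
  then show ?thesis using r by simp
qed

lemma nconst_pt: "nconst c = pt 0 (\<lambda>_. True) (\<lambda>_. c)"
  by (rule ext) (auto simp: nconst_def pt_def)

lemma const_rpr: "c \<in> {0,1,-1} \<Longrightarrow> rpr m 1 (pt m (\<lambda>_. True) (\<lambda>_. c))"
  apply (rule comp0[where P="\<lambda>_. True" and F="\<lambda>_. c"])
  using rpr.zero rpr.one rpr.mone by (auto simp: nconst_pt)

lemma ZD:
  fixes z y d :: "real \<Rightarrow> real"
  assumes "lo \<le> 0" "0 \<le> hi"
    and dz: "\<And>s. s \<in> {lo..hi} \<Longrightarrow> (z has_real_derivative d s) (at s within {lo..hi})"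
    and dy: "\<And>s. s \<in> {lo..hi} \<Longrightarrow> (y has_real_derivative d s) (at s within {lo..hi})"
    and "z 0 = y 0"
  shows "\<forall>s\<in>{lo..hi}. z s = y s"
proof -
  have "\<exists>c. \<forall>x\<in>{lo..hi}. z x - y x = c"
  proof (rule has_field_derivative_zero_constant)
    fix x assume x: "x \<in> {lo..hi}"
    show "((\<lambda>x. z x - y x) has_field_derivative 0) (at x within {lo..hi})"
      using DERIV_diff[OF dz[OF x] dy[OF x]] by simp
  qed auto
  then obtain c where c: "\<forall>x\<in>{lo..hi}. z x - y x = c" by blast
  have "c = 0" using c assms by force
  then show ?thesis using c by auto
qed

lemma PR_len: "length xs \<noteq> m + 1 \<Longrightarrow> PR m n f g xs = None"
  unfolding PR_def by simp

lemma PR_pt: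
  assumes "\<And>v t. length v = m \<Longrightarrow> PR m 1 f g (v @ [t]) = (if P (v @ [t]) then Some [F (v @ [t])] else None)"
  shows "PR m 1 f g = pt (m + 1) P F"
proof (rule ext)
  fix xs
  show "PR m 1 f g xs = pt (m + 1) P F xs"
  proof (cases "length xs = m + 1")
    case True
    then have "xs \<noteq> []" by auto
    then have "xs = butlast xs @ [last xs]" by simp
    moreover have "length (butlast xs) = m" using True by simp
    ultimately show ?thesis using assms[of "butlast xs" "last xs"] True
      by (metis pt_def)
  next
    case False
    then show ?thesis by (simp add: PR_len pt_def)
  qed
qed

lemma len1: "length xs = 1 \<Longrightarrow> xs = [xs ! 0]"
  by (cases xs) auto

lemma GEN1:
  fixes y :: "real \<Rightarrow> real" and \<phi> :: "real \<Rightarrow> real \<Rightarrow> real"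
  assumes lv: "length v = m"
  and Fg: "\<And>\<tau> x. Fg (v @ [\<tau>, x]) = \<phi> \<tau> x"
  and iD: "is_interval D0" and D00: "0 \<in> D0"
  and y0: "y 0 = Ff v"
  and dy: "\<And>t. t \<in> D0 \<Longrightarrow> (y has_real_derivative \<phi> t (y t)) (at t within D0)"
  and cy: "continuous_on D0 (\<lambda>t. \<phi> t (y t))"
  and cont: "\<And>S z. continuous_on S z \<Longrightarrow> continuous_on S (\<lambda>s. \<phi> s (z s))"
  and uniq: "\<And>lo hi z. lo \<le> 0 \<Longrightarrow> 0 \<le> hi \<Longrightarrow> z 0 = Ff v \<Longrightarrow> continuous_on {lo..hi} z
     \<Longrightarrow> (\<And>s. s \<in> {lo..hi} \<Longrightarrow> (z has_real_derivative \<phi> s (z s)) (at s within {lo..hi}))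
     \<Longrightarrow> {lo..hi} \<subseteq> D0 \<and> (\<forall>s\<in>{lo..hi}. z s = y s)"
  shows "PR m 1 (pt m (\<lambda>_. True) Ff) (pt (m+1+1) (\<lambda>_. True) Fg) (v @ [t]) = (if t \<in> D0 then Some [y t] else None)"
proof (rule GEN[where c="[Ff v]" and \<Phi>="\<lambda>\<tau> z. [Fg (v @ [\<tau>] @ z)]" and Y="\<lambda>t. [y t]"])
  have FF: "\<And>s l. length l = 1 \<Longrightarrow> Fg (v @ [s] @ l) = \<phi> s (l ! 0)"
  proof -
    fix s and l :: "real list" assume "length l = 1"
    then have "l = [l ! 0]" by (rule len1)
    then have eq: "v @ [s] @ l = v @ [s, l ! 0]" by (metis append_Cons append_Nil)
    show "Fg (v @ [s] @ l) = \<phi> s (l ! 0)" unfolding eq by (rule Fg)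
  qed
  show "pt m (\<lambda>_. True) Ff v = Some [Ff v]" using lv by (simp add: pt_def)
  show "\<And>\<tau> z. length z = 1 \<Longrightarrow> pt (m + 1 + 1) (\<lambda>_. True) Fg (v @ [\<tau>] @ z) = Some [Fg (v @ [\<tau>] @ z)]"
    using lv by (simp add: pt_def)
  show "((\<lambda>s. [y s] ! k) has_real_derivative [Fg (v @ [t] @ [y t])] ! k) (at t within D0)"
    if "t \<in> D0" "k < 1" for t k
    using dy[OF that(1)] FF[of "[y t]" t] that(2) by simp
  show "continuous_on D0 (\<lambda>t. [Fg (v @ [t] @ [y t])] ! k)" if "k < 1" for k
    using cy FF that by simp
  show "continuous_on S (\<lambda>s. [Fg (v @ [s] @ z s)] ! k)"
    if c: "\<And>k. k < 1 \<Longrightarrow> continuous_on S (\<lambda>s. z s ! k)" and l: "\<And>s. s \<in> S \<Longrightarrow> length (z s) = 1" and k: "k < 1"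
    for S z k
  proof (rule continuous_on_eq[OF cont[OF c[of 0]]])
    show "\<And>s. s \<in> S \<Longrightarrow> \<phi> s (z s ! 0) = [Fg (v @ [s] @ z s)] ! k"
      using FF l k by simp
  qed simp
  show "{lo..hi} \<subseteq> D0 \<and> (\<forall>s\<in>{lo..hi}. z s = [y s])"
    if lo: "lo \<le> 0" and hi: "0 \<le> hi" and l: "\<And>s. s \<in> {lo..hi} \<Longrightarrow> length (z s) = 1" and z0: "z 0 = [Ff v]"
      and c: "\<And>k. k < 1 \<Longrightarrow> continuous_on {lo..hi} (\<lambda>s. z s ! k)"
      and d: "\<And>s k. s \<in> {lo..hi} \<Longrightarrow> k < 1 \<Longrightarrow> ((\<lambda>s. z s ! k) has_real_derivative [Fg (v @ [s] @ z s)] ! k) (at s within {lo..hi})"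
    for lo hi z
  proof -
    have "{lo..hi} \<subseteq> D0 \<and> (\<forall>s\<in>{lo..hi}. z s ! 0 = y s)"
    proof (rule uniq[OF lo hi])
      show "z 0 ! 0 = Ff v" using z0 by simp
      show "continuous_on {lo..hi} (\<lambda>s. z s ! 0)" using c by simp
      fix s assume s: "s \<in> {lo..hi}"
      show "((\<lambda>s. z s ! 0) has_real_derivative \<phi> s (z s ! 0)) (at s within {lo..hi})"
        using d[OF s, of 0] FF[OF l[OF s]] by simp
    qed
    moreover have "\<And>s. s \<in> {lo..hi} \<Longrightarrow> z s = [z s ! 0]" using l len1 by blast
    ultimately show ?thesis by auto
  qed
qed (use lv iD D00 y0 in auto)

lemma GENNF:
  fixes y \<psi> :: "real \<Rightarrow> real"
  assumes lv: "length v = m"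
  and Fg: "\<And>\<tau> x. Fg (v @ [\<tau>, x]) = \<psi> \<tau>"
  and y0: "y 0 = Ff v"
  and dy: "\<And>t. (y has_real_derivative \<psi> t) (at t)"
  and c\<psi>: "continuous_on UNIV \<psi>"
  shows "PR m 1 (pt m (\<lambda>_. True) Ff) (pt (m+1+1) (\<lambda>_. True) Fg) (v @ [t]) = Some [y t]"
proof -
  have "PR m 1 (pt m (\<lambda>_. True) Ff) (pt (m+1+1) (\<lambda>_. True) Fg) (v @ [t]) = (if t \<in> UNIV then Some [y t] else None)"
  proof (rule GEN1[where \<phi>="\<lambda>\<tau> x. \<psi> \<tau>"])
    show "\<And>t. t \<in> UNIV \<Longrightarrow> (y has_real_derivative \<psi> t) (at t within UNIV)" using dy by simp
    show "\<And>S z. continuous_on S z \<Longrightarrow> continuous_on S \<psi>"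
      using continuous_on_subset[OF c\<psi>] by blast
    show "{lo..hi} \<subseteq> UNIV \<and> (\<forall>s\<in>{lo..hi}. z s = y s)"
      if "lo \<le> 0" "0 \<le> hi" "z 0 = Ff v" "continuous_on {lo..hi} z"
         "\<And>s. s \<in> {lo..hi} \<Longrightarrow> (z has_real_derivative \<psi> s) (at s within {lo..hi})" for lo hi z
    proof -
      have "\<forall>s\<in>{lo..hi}. z s = y s"
      proof (rule ZD[OF that(1,2) that(5)])
        show "\<And>s. s \<in> {lo..hi} \<Longrightarrow> (y has_real_derivative \<psi> s) (at s within {lo..hi})"
          using dy has_field_derivative_at_within by blast
        show "z 0 = y 0" using that(3) y0 by simp
      qed
      then show ?thesis by simp
    qed
  qed (use lv Fg y0 c\<psi> in auto)
  then show ?thesis by simp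
qed

lemma proj_rpr: "i < n \<Longrightarrow> rpr n 1 (pt n (\<lambda>_. True) (\<lambda>xs. xs ! i))"
proof (induction n arbitrary: i)
  case 0 then show ?case by simp
next
  case (Suc m)
  show ?case
  proof (cases "i = m")
    case True
    have f: "rpr m 1 (pt m (\<lambda>_. True) (\<lambda>_. 0))" by (rule const_rpr) simp
    have g: "rpr (m+1+1) 1 (pt (m+1+1) (\<lambda>_. True) (\<lambda>_. 1))" by (rule const_rpr) simp
    have "PR m 1 (pt m (\<lambda>_. True) (\<lambda>_. 0)) (pt (m+1+1) (\<lambda>_. True) (\<lambda>_. 1)) = pt (m+1) (\<lambda>_. True) (\<lambda>xs. xs ! m)"
    proof (rule PR_pt)
      fix v :: "real list" and t :: real assume lv: "length v = m"
      have "PR m 1 (pt m (\<lambda>_. True) (\<lambda>_. 0)) (pt (m+1+1) (\<lambda>_. True) (\<lambda>_. 1)) (v @ [t]) = Some [t]"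
        by (rule GENNF[where \<psi>="\<lambda>_. 1" and y="\<lambda>t. t", OF lv]) (auto intro: DERIV_ident)
      then show "PR m 1 (pt m (\<lambda>_. True) (\<lambda>_. 0)) (pt (m+1+1) (\<lambda>_. True) (\<lambda>_. 1)) (v @ [t]) =
          (if True then Some [(v @ [t]) ! m] else None)" using lv by (simp add: nth_append)
    qed
    then show ?thesis using rpr.pr[OF f g] True by simp
  next
    case False
    then have im: "i < m" using Suc.prems by simp
    have f: "rpr m 1 (pt m (\<lambda>_. True) (\<lambda>xs. xs ! i))" by (rule Suc.IH[OF im])
    have g: "rpr (m+1+1) 1 (pt (m+1+1) (\<lambda>_. True) (\<lambda>_. 0))" by (rule const_rpr) simp
    have "PR m 1 (pt m (\<lambda>_. True) (\<lambda>xs. xs ! i)) (pt (m+1+1) (\<lambda>_. True) (\<lambda>_. 0)) = pt (m+1) (\<lambda>_. True) (\<lambda>xs. xs ! i)"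
    proof (rule PR_pt)
      fix v :: "real list" and t :: real assume lv: "length v = m"
      have "PR m 1 (pt m (\<lambda>_. True) (\<lambda>xs. xs ! i)) (pt (m+1+1) (\<lambda>_. True) (\<lambda>_. 0)) (v @ [t]) = Some [v ! i]"
        by (rule GENNF[where \<psi>="\<lambda>_. 0" and y="\<lambda>t. v ! i", OF lv]) auto
      then show "PR m 1 (pt m (\<lambda>_. True) (\<lambda>xs. xs ! i)) (pt (m+1+1) (\<lambda>_. True) (\<lambda>_. 0)) (v @ [t]) =
          (if True then Some [(v @ [t]) ! i] else None)" using lv im by (simp add: nth_append)
    qed
    then show ?thesis using rpr.pr[OF f g] by simp
  qed
qed

lemma add_rpr: "rpr 2 1 (pt 2 (\<lambda>_. True) (\<lambda>xs. xs ! 0 + xs ! 1))"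
proof -
  have f: "rpr 1 1 (pt 1 (\<lambda>_. True) (\<lambda>xs. xs ! 0))" by (rule proj_rpr) simp
  have g: "rpr (1+1+1) 1 (pt (1+1+1) (\<lambda>_. True) (\<lambda>_. 1))" by (rule const_rpr) simp
  have "PR 1 1 (pt 1 (\<lambda>_. True) (\<lambda>xs. xs ! 0)) (pt (1+1+1) (\<lambda>_. True) (\<lambda>_. 1)) = pt (1+1) (\<lambda>_. True) (\<lambda>xs. xs ! 0 + xs ! 1)"
  proof (rule PR_pt)
    fix v :: "real list" and t :: real assume lv: "length v = (1::nat)"
    have "PR 1 1 (pt 1 (\<lambda>_. True) (\<lambda>xs. xs ! 0)) (pt (1+1+1) (\<lambda>_. True) (\<lambda>_. 1)) (v @ [t]) = Some [v ! 0 + t]"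
      by (rule GENNF[where \<psi>="\<lambda>_. 1" and y="\<lambda>t. v ! 0 + t", OF lv]) (auto intro!: derivative_eq_intros)
    then show "PR 1 1 (pt 1 (\<lambda>_. True) (\<lambda>xs. xs ! 0)) (pt (1+1+1) (\<lambda>_. True) (\<lambda>_. 1)) (v @ [t]) =
        (if True then Some [(v @ [t]) ! 0 + (v @ [t]) ! 1] else None)" using lv by (simp add: nth_append)
  qed
  then show ?thesis using rpr.pr[OF f g] by (simp add: numeral_2_eq_2)
qed

lemma mult_rpr: "rpr 2 1 (pt 2 (\<lambda>_. True) (\<lambda>xs. xs ! 0 * xs ! 1))"
proof -
  have f: "rpr 1 1 (pt 1 (\<lambda>_. True) (\<lambda>_. 0))" by (rule const_rpr) simp
  have g: "rpr (1+1+1) 1 (pt (1+1+1) (\<lambda>_. True) (\<lambda>xs. xs ! 0))" by (rule proj_rpr) simp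
  have "PR 1 1 (pt 1 (\<lambda>_. True) (\<lambda>_. 0)) (pt (1+1+1) (\<lambda>_. True) (\<lambda>xs. xs ! 0)) = pt (1+1) (\<lambda>_. True) (\<lambda>xs. xs ! 0 * xs ! 1)"
  proof (rule PR_pt)
    fix v :: "real list" and t :: real assume lv: "length v = (1::nat)"
    have "PR 1 1 (pt 1 (\<lambda>_. True) (\<lambda>_. 0)) (pt (1+1+1) (\<lambda>_. True) (\<lambda>xs. xs ! 0)) (v @ [t]) = Some [v ! 0 * t]"
      by (rule GENNF[where \<psi>="\<lambda>_. v ! 0" and y="\<lambda>t. v ! 0 * t", OF lv])
         (use lv in \<open>auto intro!: derivative_eq_intros simp: nth_append\<close>)
    then show "PR 1 1 (pt 1 (\<lambda>_. True) (\<lambda>_. 0)) (pt (1+1+1) (\<lambda>_. True) (\<lambda>xs. xs ! 0)) (v @ [t]) =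
        (if True then Some [(v @ [t]) ! 0 * (v @ [t]) ! 1] else None)" using lv by (simp add: nth_append)
  qed
  then show ?thesis using rpr.pr[OF f g] by (simp add: numeral_2_eq_2)
qed

lemma neg_rpr: "rpr m 1 (pt m Q G) \<Longrightarrow> rpr m 1 (pt m Q (\<lambda>xs. - G xs))"
  by (rule comp2[OF mult_rpr _ const_rpr[of "-1"]]) auto

lemma add_gen: "rpr m 1 (pt m Q1 G1) \<Longrightarrow> rpr m 1 (pt m Q2 G2) \<Longrightarrow> rpr m 1 (pt m (\<lambda>xs. Q1 xs \<and> Q2 xs) (\<lambda>xs. G1 xs + G2 xs))"
  by (rule comp2[OF add_rpr]) auto

lemma mult_gen: "rpr m 1 (pt m Q1 G1) \<Longrightarrow> rpr m 1 (pt m Q2 G2) \<Longrightarrow> rpr m 1 (pt m (\<lambda>xs. Q1 xs \<and> Q2 xs) (\<lambda>xs. G1 xs * G2 xs))"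
  by (rule comp2[OF mult_rpr]) auto

lemma exp_rpr: "rpr 1 1 (pt 1 (\<lambda>_. True) (\<lambda>xs. exp (xs ! 0)))"
proof -
  have f: "rpr 0 1 (pt 0 (\<lambda>_. True) (\<lambda>_. 1))" by (rule const_rpr) simp
  have g: "rpr (0+1+1) 1 (pt (0+1+1) (\<lambda>_. True) (\<lambda>xs. xs ! 1))" by (rule proj_rpr) simp
  have "PR 0 1 (pt 0 (\<lambda>_. True) (\<lambda>_. 1)) (pt (0+1+1) (\<lambda>_. True) (\<lambda>xs. xs ! 1)) = pt (0+1) (\<lambda>_. True) (\<lambda>xs. exp (xs ! 0))"
  proof (rule PR_pt)
    fix v :: "real list" and t :: real assume lv: "length v = 0"
    have "PR 0 1 (pt 0 (\<lambda>_. True) (\<lambda>_. 1)) (pt (0+1+1) (\<lambda>_. True) (\<lambda>xs. xs ! 1)) (v @ [t]) = (if t \<in> UNIV then Some [exp t] else None)"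
    proof (rule GEN1[where \<phi>="\<lambda>\<tau> x. x", OF lv])
      show "\<And>t. t \<in> UNIV \<Longrightarrow> (exp has_real_derivative exp t) (at t within UNIV)"
        by (simp add: DERIV_exp)
      show "{lo..hi} \<subseteq> UNIV \<and> (\<forall>s\<in>{lo..hi}. z s = exp s)"
        if lo: "lo \<le> 0" and hi: "0 \<le> hi" and z0: "z 0 = 1" and "continuous_on {lo..hi} z"
         and d: "\<And>s. s \<in> {lo..hi} \<Longrightarrow> (z has_real_derivative z s) (at s within {lo..hi})" for lo hi z
      proof -
        have "\<exists>c. \<forall>x\<in>{lo..hi}. z x * exp (- x) = c"
        proof (rule has_field_derivative_zero_constant)
          fix x assume x: "x \<in> {lo..hi}"
          have "((\<lambda>x. z x * exp (- x)) has_field_derivative (z x * exp (- x) + z x * (exp (- x) * (- 1)))) (at x within {lo..hi})"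
            by (intro derivative_eq_intros) (use d[OF x] in auto)
          then show "((\<lambda>x. z x * exp (- x)) has_field_derivative 0) (at x within {lo..hi})" by simp
        qed simp
        then obtain c where c: "\<forall>x\<in>{lo..hi}. z x * exp (- x) = c" by blast
        have "c = 1" using c[rule_format, of 0] lo hi z0 by simp
        then have "\<forall>s\<in>{lo..hi}. z s = exp s" using c by (simp add: exp_minus field_simps)
        then show ?thesis by simp
      qed
    qed (use lv in \<open>auto intro!: continuous_intros simp: nth_append\<close>)
    then show "PR 0 1 (pt 0 (\<lambda>_. True) (\<lambda>_. 1)) (pt (0+1+1) (\<lambda>_. True) (\<lambda>xs. xs ! 1)) (v @ [t]) =
        (if True then Some [exp ((v @ [t]) ! 0)] else None)" using lv by simp
  qed
  then show ?thesis using rpr.pr[OF f g] by simp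
qed

lemma ln1_rpr: "rpr 1 1 (pt 1 (\<lambda>xs. xs ! 0 > -1) (\<lambda>xs. ln (1 + xs ! 0)))"
proof -
  have f: "rpr 0 1 (pt 0 (\<lambda>_. True) (\<lambda>_. 0))" by (rule const_rpr) simp
  have p: "rpr 2 1 (pt 2 (\<lambda>_. True) (\<lambda>xs. - (xs ! 1)))" by (rule neg_rpr, rule proj_rpr) simp
  have g2: "rpr 2 1 (pt 2 (\<lambda>_. True) (\<lambda>xs. exp (- (xs ! 1))))"
    by (rule comp1[OF exp_rpr p]) auto
  have g: "rpr (0+1+1) 1 (pt (0+1+1) (\<lambda>_. True) (\<lambda>xs. exp (- (xs ! 1))))" using g2 by (simp add: numeral_2_eq_2)
  have "PR 0 1 (pt 0 (\<lambda>_. True) (\<lambda>_. 0)) (pt (0+1+1) (\<lambda>_. True) (\<lambda>xs. exp (- (xs ! 1)))) = pt (0+1) (\<lambda>xs. xs ! 0 > -1) (\<lambda>xs. ln (1 + xs ! 0))"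
  proof (rule PR_pt)
    fix v :: "real list" and t :: real assume lv: "length v = 0"
    have "PR 0 1 (pt 0 (\<lambda>_. True) (\<lambda>_. 0)) (pt (0+1+1) (\<lambda>_. True) (\<lambda>xs. exp (- (xs ! 1)))) (v @ [t]) = (if t \<in> {-1<..} then Some [ln (1 + t)] else None)"
    proof (rule GEN1[where \<phi>="\<lambda>\<tau> x. exp (- x)", OF lv])
      show "\<And>t. t \<in> {-1<..} \<Longrightarrow> ((\<lambda>t. ln (1 + t)) has_real_derivative exp (- ln (1 + t))) (at t within {-1<..})"
      proof -
        fix t :: real assume "t \<in> {-1<..}"
        then have t: "1 + t > 0" by simp
        have "((\<lambda>t. ln (1 + t)) has_real_derivative (inverse (1 + t) * (0 + 1))) (at t within {-1<..})"
          by (intro derivative_eq_intros) (use t in \<open>auto simp: inverse_eq_divide\<close>)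
        moreover have "exp (- ln (1 + t)) = inverse (1 + t)" using t by (simp add: exp_minus inverse_eq_divide)
        ultimately show "((\<lambda>t. ln (1 + t)) has_real_derivative exp (- ln (1 + t))) (at t within {-1<..})" by simp
      qed
      have ci: "continuous_on {-1<..} (\<lambda>t::real. inverse (1 + t))"
        by (intro continuous_intros) auto
      show "continuous_on {-1<..} (\<lambda>t::real. exp (- ln (1 + t)))"
        by (rule continuous_on_cong[THEN iffD1, OF refl _ ci]) (simp add: exp_minus)
      show "{lo..hi} \<subseteq> {-1<..} \<and> (\<forall>s\<in>{lo..hi}. z s = ln (1 + s))"
        if lo: "lo \<le> 0" and hi: "0 \<le> hi" and z0: "z 0 = 0" and "continuous_on {lo..hi} z"
         and d: "\<And>s. s \<in> {lo..hi} \<Longrightarrow> (z has_real_derivative exp (- z s)) (at s within {lo..hi})" for lo hi z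
      proof -
        have e: "\<forall>s\<in>{lo..hi}. exp (z s) = 1 + s"
        proof (rule ZD[OF lo hi, where d="\<lambda>_. 1"])
          fix s assume s: "s \<in> {lo..hi}"
          have "((\<lambda>s. exp (z s)) has_real_derivative exp (z s) * exp (- z s)) (at s within {lo..hi})"
            by (intro derivative_eq_intros) (use d[OF s] in auto)
          then show "((\<lambda>s. exp (z s)) has_real_derivative 1) (at s within {lo..hi})"
            by (simp add: exp_minus)
          show "((\<lambda>s. 1 + s) has_real_derivative 1) (at s within {lo..hi})"
            by (intro derivative_eq_intros) auto
        qed (use z0 in simp)
        have "{lo..hi} \<subseteq> {-1<..}"
        proof
          fix s assume s: "s \<in> {lo..hi}"
          have "exp (z s) = 1 + s" using e s by blast
          moreover have "0 < exp (z s)" by simp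
          ultimately show "s \<in> {-1<..}" by simp
        qed
        moreover have "\<forall>s\<in>{lo..hi}. z s = ln (1 + s)"
        proof
          fix s assume s: "s \<in> {lo..hi}"
          have "ln (exp (z s)) = ln (1 + s)" using e s by simp
          then show "z s = ln (1 + s)" by simp
        qed
        ultimately show ?thesis by simp
      qed
    qed (use lv in \<open>auto intro!: continuous_intros simp: nth_append\<close>)
    then show "PR 0 1 (pt 0 (\<lambda>_. True) (\<lambda>_. 0)) (pt (0+1+1) (\<lambda>_. True) (\<lambda>xs. exp (- (xs ! 1)))) (v @ [t]) =
        (if (v @ [t]) ! 0 > -1 then Some [ln (1 + (v @ [t]) ! 0)] else None)" using lv by simp
  qed
  then show ?thesis using rpr.pr[OF f g] by simp
qed

lemma ln_rpr: "rpr 1 1 (pt 1 (\<lambda>xs. xs ! 0 > 0) (\<lambda>xs. ln (xs ! 0)))"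
proof -
  have a: "rpr 1 1 (pt 1 (\<lambda>xs. True \<and> True) (\<lambda>xs. xs ! 0 + -1))"
    by (rule add_gen[OF proj_rpr const_rpr]) auto
  show ?thesis by (rule comp1[OF ln1_rpr a]) auto
qed

lemma recip_rpr: "rpr 1 1 (pt 1 (\<lambda>xs. xs ! 0 > 0) (\<lambda>xs. 1 / xs ! 0))"
  by (rule comp1[OF exp_rpr neg_rpr[OF ln_rpr]]) (auto simp: exp_minus inverse_eq_divide)

lemma half_rpr: "rpr m 1 (pt m (\<lambda>_. True) (\<lambda>_. 1 / 2))"
proof -
  have a: "rpr m 1 (pt m (\<lambda>xs. True \<and> True) (\<lambda>xs. 1 + 1))"
    by (rule add_gen[OF const_rpr const_rpr]) auto
  show ?thesis by (rule comp1[OF recip_rpr a]) auto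
qed

lemma sqrt_exp: "0 < (x::real) \<Longrightarrow> sqrt x = exp (ln x * (1 / 2))"
  using powr_half_sqrt[of x] by (simp add: powr_def mult.commute)

lemma sqrt_rpr: "rpr 1 1 (pt 1 (\<lambda>xs. xs ! 0 > 0) (\<lambda>xs. sqrt (xs ! 0)))"
proof -
  have a: "rpr 1 1 (pt 1 (\<lambda>xs. xs ! 0 > 0 \<and> True) (\<lambda>xs. ln (xs ! 0) * (1 / 2)))"
    by (rule mult_gen[OF ln_rpr half_rpr])
  show ?thesis by (rule comp1[OF exp_rpr a]) (auto simp: sqrt_exp)
qed

lemma sq1: "0 < 1 + (x::real) * x"
proof -
  have "0 \<le> x * x" by simp
  then show ?thesis by linarith
qed

lemma atg_rpr: "rpr 2 1 (pt 2 (\<lambda>_. True) (\<lambda>xs. 1 / (1 + xs ! 0 * xs ! 0)))"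
proof -
  have p: "rpr 2 1 (pt 2 (\<lambda>_. True) (\<lambda>xs. xs ! 0))" by (rule proj_rpr) simp
  have a: "rpr 2 1 (pt 2 (\<lambda>xs. True \<and> (True \<and> True)) (\<lambda>xs. 1 + xs ! 0 * xs ! 0))"
    by (rule add_gen[OF const_rpr mult_gen[OF p p]]) simp
  show ?thesis by (rule comp1[OF recip_rpr a]) (auto simp: sq1)
qed

lemma arctan_rpr: "rpr 1 1 (pt 1 (\<lambda>_. True) (\<lambda>xs. arctan (xs ! 0)))"
proof -
  have f: "rpr 0 1 (pt 0 (\<lambda>_. True) (\<lambda>_. 0))" by (rule const_rpr) simp
  have g: "rpr (0+1+1) 1 (pt (0+1+1) (\<lambda>_. True) (\<lambda>xs. 1 / (1 + xs ! 0 * xs ! 0)))"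
    using atg_rpr by (simp add: numeral_2_eq_2)
  have "PR 0 1 (pt 0 (\<lambda>_. True) (\<lambda>_. 0)) (pt (0+1+1) (\<lambda>_. True) (\<lambda>xs. 1 / (1 + xs ! 0 * xs ! 0))) = pt (0+1) (\<lambda>_. True) (\<lambda>xs. arctan (xs ! 0))"
  proof (rule PR_pt)
    fix v :: "real list" and t :: real assume lv: "length v = 0"
    have "PR 0 1 (pt 0 (\<lambda>_. True) (\<lambda>_. 0)) (pt (0+1+1) (\<lambda>_. True) (\<lambda>xs. 1 / (1 + xs ! 0 * xs ! 0))) (v @ [t]) = Some [arctan t]"
    proof (rule GENNF[where \<psi>="\<lambda>\<tau>. 1 / (1 + \<tau> * \<tau>)", OF lv])
      show "\<And>t. (arctan has_real_derivative 1 / (1 + t * t)) (at t)"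
        using DERIV_arctan by (simp add: power2_eq_square inverse_eq_divide)
      have "\<And>x::real. 1 + x * x \<noteq> 0" using sq1 by (metis less_irrefl)
      then show "continuous_on UNIV (\<lambda>\<tau>::real. 1 / (1 + \<tau> * \<tau>))"
        by (intro continuous_intros) auto
    qed (use lv in auto)
    then show "PR 0 1 (pt 0 (\<lambda>_. True) (\<lambda>_. 0)) (pt (0+1+1) (\<lambda>_. True) (\<lambda>xs. 1 / (1 + xs ! 0 * xs ! 0))) (v @ [t]) =
        (if True then Some [arctan ((v @ [t]) ! 0)] else None)" using lv by simp
  qed
  then show ?thesis using rpr.pr[OF f g] by simp
qed

lemma pi_rpr: "rpr 0 1 (pt 0 (\<lambda>_. True) (\<lambda>_. pi))"
proof -
  have c1: "rpr 0 1 (pt 0 (\<lambda>_. True) (\<lambda>_. 1))" by (rule const_rpr) simp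
  have c2: "rpr 0 1 (pt 0 (\<lambda>xs. True \<and> True) (\<lambda>xs. 1 + 1))" by (rule add_gen[OF c1 c1])
  have c4: "rpr 0 1 (pt 0 (\<lambda>xs. (True \<and> True) \<and> (True \<and> True)) (\<lambda>xs. (1 + 1) + (1 + 1)))" by (rule add_gen[OF c2 c2])
  have at: "rpr 0 1 (pt 0 (\<lambda>_. True) (\<lambda>_. arctan 1))" by (rule comp1[OF arctan_rpr c1]) auto
  show ?thesis by (rule comp2[OF mult_rpr c4 at]) (auto simp: arctan_one)
qed

definition SCf :: pfun where "SCf = juxt 0 [nconst 0, nconst 1]"
definition SCg :: pfun where "SCg = juxt 3 [pt 3 (\<lambda>_. True) (\<lambda>xs. xs ! 2), pt 3 (\<lambda>_. True) (\<lambda>xs. - (xs ! 1))]"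

lemma SC_rpr: "rpr 1 2 (PR 0 2 SCf SCg)"
proof -
  have f: "rpr 0 2 SCf" unfolding SCf_def using rpr.juxt[of "[nconst 0, nconst 1]" 0] rpr.zero rpr.one by (simp add: numeral_2_eq_2)
  have g: "rpr 3 2 SCg" unfolding SCg_def
    using rpr.juxt[of "[pt 3 (\<lambda>_. True) (\<lambda>xs. xs ! 2), pt 3 (\<lambda>_. True) (\<lambda>xs. - (xs ! 1))]" 3]
      proj_rpr[of 2 3] neg_rpr[OF proj_rpr[of 1 3]] by (simp add: numeral_2_eq_2)
  show ?thesis using rpr.pr[of 0 2 SCf SCg] f g by (simp add: numeral_3_eq_3)
qed

lemma len2: "length xs = 2 \<Longrightarrow> xs = [xs ! 0, xs ! 1]"
  by (cases xs; cases "tl xs") auto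

lemma SC_eval: "PR 0 2 SCf SCg [t] = Some [sin t, cos t]"
proof -
  have "PR 0 2 SCf SCg ([] @ [t]) = (if t \<in> UNIV then Some [sin t, cos t] else None)"
  proof (rule GEN[where c="[0,1]" and \<Phi>="\<lambda>\<tau> z. [z ! 1, - (z ! 0)]"])
    show "SCf [] = Some [0, 1]" by (simp add: SCf_def juxt_def nconst_def)
    show "SCg ([] @ [\<tau>] @ z) = Some [z ! 1, - z ! 0]" if "length z = 2" for \<tau> z
      using that by (simp add: SCg_def juxt_def pt_def)
    show "((\<lambda>s. [sin s, cos s] ! k) has_real_derivative [[sin t, cos t] ! 1, - [sin t, cos t] ! 0] ! k) (at t within UNIV)"
      if "k < 2" for t k
    proof -
      have "k = 0 \<or> k = 1" using that by auto
      then show ?thesis by (auto intro!: derivative_eq_intros)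
    qed
    show "continuous_on UNIV (\<lambda>t::real. [[sin t, cos t] ! 1, - [sin t, cos t] ! 0] ! k)" if "k < 2" for k
    proof -
      have "k = 0 \<or> k = 1" using that by auto
      have cc: "continuous_on (UNIV::real set) cos" "continuous_on (UNIV::real set) sin"
        using continuous_on_cos[OF continuous_on_id, of "UNIV::real set"]
          continuous_on_sin[OF continuous_on_id, of "UNIV::real set"] by (simp_all add: id_def)
      then show ?thesis using \<open>k = 0 \<or> k = 1\<close> cc by (auto intro!: continuous_intros)
    qed
    show "continuous_on S (\<lambda>s. [z s ! 1, - z s ! 0] ! k)"
      if c: "\<And>k. k < 2 \<Longrightarrow> continuous_on S (\<lambda>s. z s ! k)" and k: "k < 2" for S :: "real set" and z :: "real \<Rightarrow> real list" and k
    proof -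
      have "k = 0 \<or> k = 1" using k by auto
      then show ?thesis using c[of 0] c[of 1] by (auto intro!: continuous_intros)
    qed
    show "{lo..hi} \<subseteq> UNIV \<and> (\<forall>s\<in>{lo..hi}. z s = [sin s, cos s])"
      if lo: "lo \<le> 0" and hi: "0 \<le> hi" and l: "\<And>s. s \<in> {lo..hi} \<Longrightarrow> length (z s) = 2" and z0: "z 0 = [0, 1]"
        and c: "\<And>k. k < 2 \<Longrightarrow> continuous_on {lo..hi} (\<lambda>s. z s ! k)"
        and d: "\<And>s k. s \<in> {lo..hi} \<Longrightarrow> k < 2 \<Longrightarrow> ((\<lambda>s. z s ! k) has_real_derivative [z s ! 1, - z s ! 0] ! k) (at s within {lo..hi})"
      for lo hi z
    proof -
      have d0: "((\<lambda>s. z s ! 0) has_real_derivative z s ! 1) (at s within {lo..hi})" if "s \<in> {lo..hi}" for s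
        using d[OF that, of 0] by simp
      have d1: "((\<lambda>s. z s ! 1) has_real_derivative - z s ! 0) (at s within {lo..hi})" if "s \<in> {lo..hi}" for s
        using d[OF that, of 1] by simp
      have "\<exists>c. \<forall>x\<in>{lo..hi}. (z x ! 0 - sin x) * (z x ! 0 - sin x) + (z x ! 1 - cos x) * (z x ! 1 - cos x) = c"
      proof (rule has_field_derivative_zero_constant)
        fix x assume x: "x \<in> {lo..hi}"
        have da0: "((\<lambda>x. z x ! 0 - sin x) has_real_derivative (z x ! 1 - cos x)) (at x within {lo..hi})"
          by (rule DERIV_diff[OF d0[OF x]]) (auto intro!: derivative_eq_intros)
        have da1: "((\<lambda>x. z x ! 1 - cos x) has_real_derivative (- z x ! 0 - - sin x)) (at x within {lo..hi})"
          by (rule DERIV_diff[OF d1[OF x]]) (auto intro!: derivative_eq_intros)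
        have D: "((\<lambda>x. (z x ! 0 - sin x) * (z x ! 0 - sin x) + (z x ! 1 - cos x) * (z x ! 1 - cos x)) has_field_derivative
               ((z x ! 1 - cos x) * (z x ! 0 - sin x) + (z x ! 1 - cos x) * (z x ! 0 - sin x)
               + ((- z x ! 0 - - sin x) * (z x ! 1 - cos x) + (- z x ! 0 - - sin x) * (z x ! 1 - cos x))))
               (at x within {lo..hi})"
          by (rule DERIV_add[OF DERIV_mult[OF da0 da0] DERIV_mult[OF da1 da1]])
        have V0: "((z x ! 1 - cos x) * (z x ! 0 - sin x) + (z x ! 1 - cos x) * (z x ! 0 - sin x)
               + ((- z x ! 0 - - sin x) * (z x ! 1 - cos x) + (- z x ! 0 - - sin x) * (z x ! 1 - cos x))) = 0" by (simp add: algebra_simps)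
        show "((\<lambda>x. (z x ! 0 - sin x) * (z x ! 0 - sin x) + (z x ! 1 - cos x) * (z x ! 1 - cos x)) has_field_derivative 0) (at x within {lo..hi})"
          using D unfolding V0 .
      qed simp
      then obtain c where c: "\<forall>x\<in>{lo..hi}. (z x ! 0 - sin x) * (z x ! 0 - sin x) + (z x ! 1 - cos x) * (z x ! 1 - cos x) = c" by blast
      have "c = 0" using c[rule_format, of 0] lo hi z0 by simp
      have "z s = [sin s, cos s]" if s: "s \<in> {lo..hi}" for s
      proof -
        have "(z s ! 0 - sin s) * (z s ! 0 - sin s) + (z s ! 1 - cos s) * (z s ! 1 - cos s) = 0" using c s \<open>c = 0\<close> by blast
        then have "z s ! 0 - sin s = 0 \<and> z s ! 1 - cos s = 0" by (rule sum_squares_eq_zero_iff[THEN iffD1])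
        then have "z s ! 0 = sin s" "z s ! 1 = cos s" by simp_all
        then show ?thesis using len2[OF l[OF s]] by simp
      qed
      then show ?thesis by simp
    qed
  qed (simp_all add: is_interval_univ)
  then show ?thesis by simp
qed

lemma SC_None: "length xs \<noteq> 1 \<Longrightarrow> PR 0 2 SCf SCg xs = None"
  using PR_len[of xs 0] by simp

lemma sin_rpr: "rpr 1 1 (pt 1 (\<lambda>_. True) (\<lambda>xs. sin (xs ! 0)))"
proof -
  have "pcomp (pt 2 (\<lambda>_. True) (\<lambda>xs. xs ! 0)) (PR 0 2 SCf SCg) = pt 1 (\<lambda>_. True) (\<lambda>xs. sin (xs ! 0))"
  proof (rule ext)
    fix xs :: "real list"
    show "pcomp (pt 2 (\<lambda>_. True) (\<lambda>xs. xs ! 0)) (PR 0 2 SCf SCg) xs = pt 1 (\<lambda>_. True) (\<lambda>xs. sin (xs ! 0)) xs"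
    proof (cases "length xs = 1")
      case True
      then have xs: "xs = [xs ! 0]" by (rule len1)
      have "PR 0 2 SCf SCg xs = Some [sin (xs ! 0), cos (xs ! 0)]" using SC_eval[of "xs ! 0"] xs by metis
      then show ?thesis using True by (simp add: pcomp_def pt_def)
    next
      case False
      then show ?thesis by (simp add: pcomp_def pt_def SC_None)
    qed
  qed
  then show ?thesis using rpr.comp[OF proj_rpr[of 0 2] SC_rpr] by simp
qed

lemma cos_rpr: "rpr 1 1 (pt 1 (\<lambda>_. True) (\<lambda>xs. cos (xs ! 0)))"
proof -
  have "pcomp (pt 2 (\<lambda>_. True) (\<lambda>xs. xs ! 1)) (PR 0 2 SCf SCg) = pt 1 (\<lambda>_. True) (\<lambda>xs. cos (xs ! 0))"
  proof (rule ext)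
    fix xs :: "real list"
    show "pcomp (pt 2 (\<lambda>_. True) (\<lambda>xs. xs ! 1)) (PR 0 2 SCf SCg) xs = pt 1 (\<lambda>_. True) (\<lambda>xs. cos (xs ! 0)) xs"
    proof (cases "length xs = 1")
      case True
      then have xs: "xs = [xs ! 0]" by (rule len1)
      have "PR 0 2 SCf SCg xs = Some [sin (xs ! 0), cos (xs ! 0)]" using SC_eval[of "xs ! 0"] xs by metis
      then show ?thesis using True by (simp add: pcomp_def pt_def)
    next
      case False
      then show ?thesis by (simp add: pcomp_def pt_def SC_None)
    qed
  qed
  then show ?thesis using rpr.comp[OF proj_rpr[of 1 2] SC_rpr] by simp
qed

theorem lemma3p2:
  shows "(\<forall>n::nat. \<forall>c::real. c \<in> {0, 1, -1} \<longrightarrow>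
            rpr n 1 (\<lambda>xs. if length xs = n then Some [c] else None))
       \<and> (\<forall>n i::nat. i < n \<longrightarrow>
            rpr n 1 (\<lambda>xs. if length xs = n then Some [xs ! i] else None))
       \<and> rpr 2 1 (\<lambda>xs. if length xs = 2 then Some [xs ! 0 + xs ! 1] else None)
       \<and> rpr 2 1 (\<lambda>xs. if length xs = 2 then Some [xs ! 0 * xs ! 1] else None)
       \<and> rpr 1 1 (\<lambda>xs. if length xs = 1 \<and> xs ! 0 > 0 then Some [1 / xs ! 0] else None)
       \<and> rpr 1 1 (\<lambda>xs. if length xs = 1 \<and> xs ! 0 > 0 then Some [sqrt (xs ! 0)] else None)
       \<and> rpr 1 1 (\<lambda>xs. if length xs = 1 \<and> xs ! 0 > 0 then Some [ln (xs ! 0)] else None)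
       \<and> rpr 1 1 (\<lambda>xs. if length xs = 1 then Some [sin (xs ! 0)] else None)
       \<and> rpr 1 1 (\<lambda>xs. if length xs = 1 then Some [cos (xs ! 0)] else None)
       \<and> rpr 1 1 (\<lambda>xs. if length xs = 1 then Some [exp (xs ! 0)] else None)
       \<and> rpr 0 1 (\<lambda>xs. if xs = [] then Some [pi] else None)"
proof (intro conjI allI impI)
  fix n :: nat and c :: real assume "c \<in> {0, 1, -1}"
  then show "rpr n 1 (\<lambda>xs. if length xs = n then Some [c] else None)"
    using const_rpr[of c n] unfolding pt_def by simp
next
  fix n i :: nat assume "i < n"
  then show "rpr n 1 (\<lambda>xs. if length xs = n then Some [xs ! i] else None)"
    using proj_rpr[of i n] unfolding pt_def by simp
next
  show "rpr 2 1 (\<lambda>xs. if length xs = 2 then Some [xs ! 0 + xs ! 1] else None)"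
    using add_rpr unfolding pt_def by simp
  show "rpr 2 1 (\<lambda>xs. if length xs = 2 then Some [xs ! 0 * xs ! 1] else None)"
    using mult_rpr unfolding pt_def by simp
  show "rpr 1 1 (\<lambda>xs. if length xs = 1 \<and> xs ! 0 > 0 then Some [1 / xs ! 0] else None)"
    using recip_rpr unfolding pt_def by simp
  show "rpr 1 1 (\<lambda>xs. if length xs = 1 \<and> xs ! 0 > 0 then Some [sqrt (xs ! 0)] else None)"
    using sqrt_rpr unfolding pt_def by simp
  show "rpr 1 1 (\<lambda>xs. if length xs = 1 \<and> xs ! 0 > 0 then Some [ln (xs ! 0)] else None)"
    using ln_rpr unfolding pt_def by simp
  show "rpr 1 1 (\<lambda>xs. if length xs = 1 then Some [sin (xs ! 0)] else None)"
    using sin_rpr unfolding pt_def by simp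
  show "rpr 1 1 (\<lambda>xs. if length xs = 1 then Some [cos (xs ! 0)] else None)"
    using cos_rpr unfolding pt_def by simp
  show "rpr 1 1 (\<lambda>xs. if length xs = 1 then Some [exp (xs ! 0)] else None)"
    using exp_rpr unfolding pt_def by simp
  show "rpr 0 1 (\<lambda>xs. if xs = [] then Some [pi] else None)"
    using pi_rpr unfolding pt_def by simp
qed

end
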